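(* For all $n\ge1$, \[B_n(x)=\sum_{j=0}^{\lfloor n/2\rfloor}2^j\,\hat b_{n,j}\,x^j(1+x)^{n-2j},\] where $B_n(x)=\sum_{\pi\in\mathfrak B_n}x^{\mathrm{des}_B(\pi)}$ and $\hat b_{n,j}$ is the number of type B André permutations $\pi\in\mathfrak B_n$ with exactly $j$ valleys.
   Context: $\mathfrak B_n$ is the set of signed permutations $\pi=\pi_1\cdots\pi_n$ (words over $\{\pm1,\dots,\pm n\}$ with $|\pi_1|,\dots,|\pi_n|$ a permutation of $[n]$), compared as integers; set $\pi_0=0$. $\mathrm{des}_B(\pi)=\#\{i\in\{0,\dots,n-1\}:\pi_i>\pi_{i+1}\}$. A valley of $\pi$ is $i\in\{1,\dots,n-1\}$ with $\pi_{i-1}>\pi_i<\pi_{i+1}$. For $i\in[n]$, the $\pi_i$-factorization of the word $0\pi_1\cdots\pi_n$ is $w_1w_2\pi_iw_4w_5$ where $w_2$ (resp. $w_4$) is the longest factor ending just before (resp. starting just after) $\pi_i$ all of whose letters exceed $\pi_i$. $\pi\in\mathfrak B_n$ is a type B André permutation if (i) no $i\in\{1,\dots,n-1\}$ has $\pi_{i-1}>\pi_i>\pi_{i+1}$, (ii) $\pi_{n-1}<\pi_n$, and (iii) for every valley $i$, the maximum letter of $w_2$ is smaller than the maximum letter of $w_4$ in the $\pi_i$-factorization. *)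

theory Defs
  imports Complex_Main
begin

text \<open>A signed permutation of [n] is represented by the word pi_1 ... pi_n as an int list.\<close>
definition signed_perms :: "nat \<Rightarrow> int list set" where
  "signed_perms n = {w. length w = n \<and> distinct (map abs w) \<and> set (map abs w) = {1..int n}}"

text \<open>The word 0 pi_1 ... pi_n, indexed from 0 (so position i holds pi_i, with pi_0 = 0).\<close>
definition zword :: "int list \<Rightarrow> int list" where
  "zword w = 0 # w"

definition desB :: "int list \<Rightarrow> nat" where
  "desB w = card {i. i < length w \<and> zword w ! i > zword w ! (i + 1)}"

definition valleys :: "int list \<Rightarrow> nat set" where
  "valleys w = {i. 1 \<le> i \<and> i < length w \<and>
      zword w ! (i - 1) > zword w ! i \<and> zword w ! i < zword w ! (i + 1)}"

text \<open>Max letter of w2 (longest factor ending just before position i with all letters > pi_i)\<close>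
definition max_w2 :: "int list \<Rightarrow> nat \<Rightarrow> int" where
  "max_w2 w i = Max {zword w ! k | k. k < i \<and>
      (\<forall>m. k \<le> m \<and> m < i \<longrightarrow> zword w ! m > zword w ! i)}"

text \<open>Max letter of w4 (longest factor starting just after position i with all letters > pi_i)\<close>
definition max_w4 :: "int list \<Rightarrow> nat \<Rightarrow> int" where
  "max_w4 w i = Max {zword w ! k | k. i < k \<and> k \<le> length w \<and>
      (\<forall>m. i < m \<and> m \<le> k \<longrightarrow> zword w ! m > zword w ! i)}"

definition andreB :: "int list \<Rightarrow> bool" where
  "andreB w \<longleftrightarrow>
     (\<not> (\<exists>i. 1 \<le> i \<and> i < length w \<and>
            zword w ! (i - 1) > zword w ! i \<and> zword w ! i > zword w ! (i + 1))) \<and>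
     zword w ! (length w - 1) < zword w ! (length w) \<and>
     (\<forall>i \<in> valleys w. max_w2 w i < max_w4 w i)"

definition BnPoly :: "nat \<Rightarrow> real \<Rightarrow> real" where
  "BnPoly n x = (\<Sum>w\<in>signed_perms n. x ^ desB w)"

definition bhat :: "nat \<Rightarrow> nat \<Rightarrow> nat" where
  "bhat n j = card {w \<in> signed_perms n. andreB w \<and> card (valleys w) = j}"

end

theory Submission
  imports Defs
begin


definition desI :: "int list \<Rightarrow> nat" where
  "desI l = card {i. Suc i < length l \<and> l ! i > l ! Suc i}"

lemma desI_Nil[simp]: "desI [] = 0" by (simp add: desI_def)

lemma desI_Cons: "desI (a # l) = (if l \<noteq> [] \<and> a > hd l then 1 else 0) + desI l"
proof -
  have e: "{i. Suc i < length (a#l) \<and> (a#l) ! i > (a#l) ! Suc i} =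
     (if l \<noteq> [] \<and> a > hd l then {0} else {}) \<union> Suc ` {i. Suc i < length l \<and> l ! i > l ! Suc i}"
    (is "?A = ?B")
  proof (rule set_eqI)
    fix i show "i \<in> ?A \<longleftrightarrow> i \<in> ?B"
      by (cases i) (auto simp: hd_conv_nth)
  qed
  have fin: "finite {i. Suc i < length l \<and> l ! i > l ! Suc i}" by (rule finite_subset[of _ "{..<length l}"]) auto
  have "0 \<notin> Suc ` {i. Suc i < length l \<and> l ! i > l ! Suc i}" by auto
  then show ?thesis unfolding desI_def e
    using fin by (auto simp: card_image)
qed

lemma desI_single[simp]: "desI [a] = 0" by (simp add: desI_Cons)

lemma desI_append: "desI (u @ w) = desI u + desI w + (if u \<noteq> [] \<and> w \<noteq> [] \<and> last u > hd w then 1 else 0)"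
proof (induction u)
  case Nil then show ?case by simp
next
  case (Cons a u)
  then show ?case
    by (cases u) (auto simp: desI_Cons)
qed

lemma desI_split: "desI (u @ c # v) = desI u + (if u \<noteq> [] \<and> last u > c then 1 else 0)
   + (if v \<noteq> [] \<and> c > hd v then 1 else 0) + desI v"
  by (simp add: desI_append desI_Cons)

lemma desI_revneg: "desI (rev (map uminus l)) = desI l"
proof (induction l)
  case Nil then show ?case by simp
next
  case (Cons a l)
  then show ?case
    by (cases l) (auto simp: desI_append desI_Cons last_rev hd_map)
qed



definition vall :: "int list \<Rightarrow> nat set" where
  "vall l = {i. 1 \<le> i \<and> Suc i < length l \<and> l ! (i - 1) > l ! i \<and> l ! i < l ! Suc i}"

definition w2 :: "int list \<Rightarrow> nat \<Rightarrow> int set" where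
  "w2 l i = {l ! k | k. k < i \<and> (\<forall>p. k \<le> p \<and> p < i \<longrightarrow> l ! p > l ! i)}"

definition w4 :: "int list \<Rightarrow> nat \<Rightarrow> int set" where
  "w4 l i = {l ! k | k. i < k \<and> k < length l \<and> (\<forall>p. i < p \<and> p \<le> k \<longrightarrow> l ! p > l ! i)}"

lemma finite_vall[simp]: "finite (vall l)"
  by (rule finite_subset[of _ "{..<length l}"]) (auto simp: vall_def)

lemma nth_u: "i < length u \<Longrightarrow> (u @ m # v) ! i = u ! i" by (simp add: nth_append)
lemma nth_m: "(u @ m # v) ! length u = m" by (simp add: nth_append)
lemma nth_v: "(u @ m # v) ! (Suc (length u) + j) = v ! j" by (simp add: nth_append)

lemma split_cases:
  obtains (U) "i < length u" | (M) "i = length u" | (V) j where "i = Suc (length u) + j"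
  by (metis less_linear not_less_eq add_Suc less_imp_Suc_add)

lemma vall_split:
  assumes Hu: "\<forall>y\<in>set u. m < y" and Hv: "\<forall>y\<in>set v. m < y"
  shows "vall (u @ m # v) = vall u \<union> (if u \<noteq> [] \<and> v \<noteq> [] then {length u} else {})
           \<union> (\<lambda>j. Suc (length u) + j) ` vall v"
proof (rule set_eqI)
  fix i
  show "i \<in> vall (u @ m # v) \<longleftrightarrow> i \<in> vall u \<union> (if u \<noteq> [] \<and> v \<noteq> [] then {length u} else {})
           \<union> (\<lambda>j. Suc (length u) + j) ` vall v"
  proof (cases rule: split_cases[where i=i and u=u])
    case U
    show ?thesis
    proof (cases "Suc i < length u")
      case True
      then show ?thesis using U by (auto simp: vall_def nth_append)
    next
      case False
      then have "Suc i = length u" using U by simp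
      moreover have "u ! i > m" using Hu U by auto
      ultimately show ?thesis using U by (auto simp: vall_def nth_append)
    qed
  next
    case M
    show ?thesis
    proof (cases "u \<noteq> [] \<and> v \<noteq> []")
      case True
      then have "u ! (length u - 1) > m" "v ! 0 > m" using Hu Hv by auto
      moreover have "1 \<le> length u" using True by (cases u) auto
      ultimately show ?thesis using M True by (auto simp: vall_def nth_append)
    next
      case False
      then show ?thesis using M by (auto simp: vall_def nth_append)
    qed
  next
    case (V j)
    show ?thesis
    proof (cases j)
      case 0
      have "v \<noteq> [] \<Longrightarrow> m < v ! 0" using Hv by auto
      then show ?thesis using V 0 by (cases v) (auto simp: vall_def nth_append)
    next
      case (Suc j')
      have "(u @ m # v) ! (i - 1) = v ! (j - 1)" using V Suc by (simp add: nth_append)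
      moreover have "(u @ m # v) ! i = v ! j" "(u @ m # v) ! Suc i = v ! Suc j" using V by (simp_all add: nth_append)
      ultimately show ?thesis using V Suc by (auto simp: vall_def)
    qed
  qed
qed



lemma w2_u:
  assumes "i < length u"
  shows "w2 (u @ m # v) i = w2 u i"
  unfolding w2_def using assms by (auto simp: nth_append)


lemma w4_u:
  assumes Hu: "\<forall>y\<in>set u. m < y" and i: "i < length u"
  shows "w4 (u @ m # v) i = w4 u i"
proof -
  let ?l = "u @ m # v"
  have key: "k < length u" if "i < k" "\<forall>p. i < p \<and> p \<le> k \<longrightarrow> ?l ! p > ?l ! i" for k
  proof (rule ccontr)
    assume "\<not> k < length u"
    then have "?l ! length u > ?l ! i" using that i by auto
    then have "m > u ! i" using i by (simp add: nth_append)
    moreover have "u ! i > m" using Hu i by auto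
    ultimately show False by simp
  qed
  show ?thesis
  proof
    show "w4 ?l i \<subseteq> w4 u i"
    proof
      fix y assume "y \<in> w4 ?l i"
      then obtain k where k: "y = ?l ! k" "i < k" "k < length ?l" "\<forall>p. i < p \<and> p \<le> k \<longrightarrow> ?l ! p > ?l ! i"
        unfolding w4_def by blast
      have ku: "k < length u" using key k by blast
      then have "\<forall>p. i < p \<and> p \<le> k \<longrightarrow> u ! p > u ! i" using k(4) i by (auto simp: nth_append)
      then show "y \<in> w4 u i" unfolding w4_def using k ku by (auto simp: nth_append)
    qed
  next
    show "w4 u i \<subseteq> w4 ?l i"
    proof
      fix y assume "y \<in> w4 u i"
      then obtain k where k: "y = u ! k" "i < k" "k < length u" "\<forall>p. i < p \<and> p \<le> k \<longrightarrow> u ! p > u ! i"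
        unfolding w4_def by blast
      then have "\<forall>p. i < p \<and> p \<le> k \<longrightarrow> ?l ! p > ?l ! i" using i by (auto simp: nth_append)
      then show "y \<in> w4 ?l i" unfolding w4_def using k by (auto simp: nth_append intro!: exI[of _ k])
    qed
  qed
qed


lemma w2_m:
  assumes Hu: "\<forall>y\<in>set u. m < y"
  shows "w2 (u @ m # v) (length u) = set u"
proof -
  have "w2 (u @ m # v) (length u) = {u ! k | k. k < length u}"
    unfolding w2_def using Hu by (auto simp: nth_append)
  also have "\<dots> = set u" by (auto simp: in_set_conv_nth)
  finally show ?thesis .
qed


lemma w4_m:
  assumes Hv: "\<forall>y\<in>set v. m < y"
  shows "w4 (u @ m # v) (length u) = set v"
proof
  show "w4 (u @ m # v) (length u) \<subseteq> set v"
    unfolding w4_def by (auto simp: nth_append)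
next
  show "set v \<subseteq> w4 (u @ m # v) (length u)"
  proof
    fix y assume "y \<in> set v"
    then obtain j where j: "j < length v" "y = v ! j" by (auto simp: in_set_conv_nth)
    have "\<forall>p. length u < p \<and> p \<le> Suc (length u) + j \<longrightarrow> (u @ m # v) ! p > (u @ m # v) ! length u"
    proof (intro allI impI)
      fix p assume p: "length u < p \<and> p \<le> Suc (length u) + j"
      then obtain q where "p = Suc (length u) + q" "q \<le> j" by (metis Suc_le_eq add_le_cancel_left le_Suc_ex)
      then show "(u @ m # v) ! p > (u @ m # v) ! length u"
        using Hv j by (auto simp: nth_append)
    qed
    then show "y \<in> w4 (u @ m # v) (length u)"
      unfolding w4_def using j by (auto simp: nth_append intro!: exI[of _ "Suc (length u) + j"])
  qed
qed


lemma w2_v: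
  assumes Hv: "\<forall>y\<in>set v. m < y" and j: "j < length v"
  shows "w2 (u @ m # v) (Suc (length u) + j) = w2 v j"
proof -
  let ?l = "u @ m # v" and ?i = "Suc (length u) + j"
  have li: "?l ! ?i = v ! j" by (simp add: nth_append)
  have vm: "v ! j > m" using Hv j by auto
  have key: "\<exists>k'. k = Suc (length u) + k'" if "k < ?i" "\<forall>p. k \<le> p \<and> p < ?i \<longrightarrow> ?l ! p > ?l ! ?i" for k
  proof (rule ccontr)
    assume "\<nexists>k'. k = Suc (length u) + k'"
    then have "k \<le> length u" by (metis le_Suc_ex not_less_eq_eq)
    then have "?l ! length u > ?l ! ?i" using that by auto
    then show False using li vm by (simp add: nth_append)
  qed
  show ?thesis
  proof
    show "w2 ?l ?i \<subseteq> w2 v j"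
    proof
      fix y assume "y \<in> w2 ?l ?i"
      then obtain k where k: "y = ?l ! k" "k < ?i" "\<forall>p. k \<le> p \<and> p < ?i \<longrightarrow> ?l ! p > ?l ! ?i"
        unfolding w2_def by blast
      obtain k' where k': "k = Suc (length u) + k'" using key k by blast
      have "\<forall>p. k' \<le> p \<and> p < j \<longrightarrow> v ! p > v ! j"
      proof (intro allI impI)
        fix p assume "k' \<le> p \<and> p < j"
        then have "?l ! (Suc (length u) + p) > ?l ! ?i" using k k' by auto
        then show "v ! p > v ! j" by (simp add: nth_append)
      qed
      then show "y \<in> w2 v j" unfolding w2_def using k k' by (auto simp: nth_append)
    qed
  next
    show "w2 v j \<subseteq> w2 ?l ?i"
    proof
      fix y assume "y \<in> w2 v j"
      then obtain k where k: "y = v ! k" "k < j" "\<forall>p. k \<le> p \<and> p < j \<longrightarrow> v ! p > v ! j"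
        unfolding w2_def by blast
      have "\<forall>p. Suc (length u) + k \<le> p \<and> p < ?i \<longrightarrow> ?l ! p > ?l ! ?i"
      proof (intro allI impI)
        fix p assume p: "Suc (length u) + k \<le> p \<and> p < ?i"
        then obtain q where "p = Suc (length u) + q" by (metis le_add1 le_Suc_ex add_leD1)
        then show "?l ! p > ?l ! ?i" using p k by (auto simp: nth_append)
      qed
      then show "y \<in> w2 ?l ?i" unfolding w2_def using k by (auto simp: nth_append intro!: exI[of _ "Suc (length u) + k"])
    qed
  qed
qed


lemma w4_v:
  assumes j: "j < length v"
  shows "w4 (u @ m # v) (Suc (length u) + j) = w4 v j"
proof -
  let ?l = "u @ m # v" and ?i = "Suc (length u) + j"
  show ?thesis
  proof
    show "w4 ?l ?i \<subseteq> w4 v j"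
    proof
      fix y assume "y \<in> w4 ?l ?i"
      then obtain k where k: "y = ?l ! k" "?i < k" "k < length ?l" "\<forall>p. ?i < p \<and> p \<le> k \<longrightarrow> ?l ! p > ?l ! ?i"
        unfolding w4_def by blast
      define k' where "k' = k - Suc (length u)"
      have k': "k = Suc (length u) + k'" using k(2) unfolding k'_def by arith
      have "\<forall>p. j < p \<and> p \<le> k' \<longrightarrow> v ! p > v ! j"
      proof (intro allI impI)
        fix p assume "j < p \<and> p \<le> k'"
        then have "?l ! (Suc (length u) + p) > ?l ! ?i" using k k' by auto
        then show "v ! p > v ! j" by (simp add: nth_append)
      qed
      then show "y \<in> w4 v j" unfolding w4_def using k k' by (auto simp: nth_append)
    qed
  next
    show "w4 v j \<subseteq> w4 ?l ?i"
    proof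
      fix y assume "y \<in> w4 v j"
      then obtain k where k: "y = v ! k" "j < k" "k < length v" "\<forall>p. j < p \<and> p \<le> k \<longrightarrow> v ! p > v ! j"
        unfolding w4_def by blast
      have "\<forall>p. ?i < p \<and> p \<le> Suc (length u) + k \<longrightarrow> ?l ! p > ?l ! ?i"
      proof (intro allI impI)
        fix p assume p: "?i < p \<and> p \<le> Suc (length u) + k"
        define q where "q = p - Suc (length u)"
        have pq: "p = Suc (length u) + q" using p unfolding q_def by arith
        have "j < q \<and> q \<le> k" using p pq by arith
        then have "v ! q > v ! j" using k by blast
        then show "?l ! p > ?l ! ?i" unfolding pq by (simp add: nth_append)
      qed
      then show "y \<in> w4 ?l ?i" unfolding w4_def using k by (auto simp: nth_append intro!: exI[of _ "Suc (length u) + k"])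
    qed
  qed
qed





definition condI :: "int list \<Rightarrow> bool" where
  "condI l = (\<not> (\<exists>i. 1 \<le> i \<and> Suc i < length l \<and> l ! (i - 1) > l ! i \<and> l ! i > l ! Suc i))"

definition condII :: "int list \<Rightarrow> bool" where
  "condII l = (2 \<le> length l \<longrightarrow> l ! (length l - 2) < l ! (length l - 1))"

definition condIII :: "int list \<Rightarrow> bool" where
  "condIII l = (\<forall>i\<in>vall l. Max (w2 l i) < Max (w4 l i))"

definition AndL :: "int list \<Rightarrow> bool" where
  "AndL l = (condI l \<and> condII l \<and> condIII l)"

lemma AndL_Nil[simp]: "AndL []"
  by (simp add: AndL_def condI_def condII_def condIII_def vall_def)

lemma condI_split:
  assumes Hu: "\<forall>y\<in>set u. m < y" and Hv: "\<forall>y\<in>set v. m < y" and du: "distinct u"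
  shows "condI (u @ m # v) \<longleftrightarrow> condI u \<and> condII u \<and> condI v"
proof -
  let ?l = "u @ m # v"
  define dd where "dd (l::int list) i = (1 \<le> i \<and> Suc i < length l \<and> l ! (i - 1) > l ! i \<and> l ! i > l ! Suc i)" for l i
  have cI: "condI l = (\<not> (\<exists>i. dd l i))" for l unfolding condI_def dd_def by simp
  have "(\<exists>i. dd ?l i) \<longleftrightarrow> (\<exists>i. dd u i) \<or> \<not> condII u \<or> (\<exists>i. dd v i)"
  proof
    assume "\<exists>i. dd ?l i"
    then obtain i where i: "dd ?l i" by blast
    show "(\<exists>i. dd u i) \<or> \<not> condII u \<or> (\<exists>i. dd v i)"
    proof (cases rule: split_cases[where i=i and u=u])
      case U
      show ?thesis
      proof (cases "Suc i < length u")
        case True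
        then have "dd u i" using i U unfolding dd_def by (auto simp: nth_append split: if_splits)
        then show ?thesis by blast
      next
        case False
        then have e: "Suc i = length u" using U by simp
        then have "length u - 2 = i - 1" "length u - 1 = i" by auto
        moreover have "2 \<le> length u" using i e unfolding dd_def by auto
        moreover have "u ! (i - 1) > u ! i" using i U unfolding dd_def by (auto simp: nth_append split: if_splits)
        ultimately have "\<not> condII u" unfolding condII_def by auto
        then show ?thesis by blast
      qed
    next
      case M
      then have "Suc i < length ?l" "?l ! i > ?l ! Suc i" using i unfolding dd_def by auto
      then have "v \<noteq> []" "m > v ! 0" using M by (auto simp: nth_append)
      moreover have "v ! 0 \<in> set v" using \<open>v \<noteq> []\<close> by simp
      ultimately show ?thesis using Hv by fastforce
    next
      case (V j)
      show ?thesis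
      proof (cases j)
        case 0
        then have "?l ! (i - 1) > ?l ! i" "i < length ?l" using i unfolding dd_def by auto
        then have "m > v ! 0" "v \<noteq> []" using V 0 by (auto simp: nth_append)
        moreover have "v ! 0 \<in> set v" using \<open>v \<noteq> []\<close> by simp
        ultimately show ?thesis using Hv by fastforce
      next
        case (Suc j')
        have "?l ! (i - 1) = v ! (j - 1)" "?l ! i = v ! j" "?l ! Suc i = v ! Suc j"
          using V Suc by (simp_all add: nth_append)
        then have "dd v j" using i V Suc unfolding dd_def by auto
        then show ?thesis by blast
      qed
    qed
  next
    assume "(\<exists>i. dd u i) \<or> \<not> condII u \<or> (\<exists>i. dd v i)"
    then show "\<exists>i. dd ?l i"
    proof (elim disjE exE)
      fix i assume "dd u i"
      then have "dd ?l i" unfolding dd_def by (auto simp: nth_append)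
      then show ?thesis by blast
    next
      assume "\<not> condII u"
      then have l2: "2 \<le> length u" and d0: "\<not> u ! (length u - 2) < u ! (length u - 1)" unfolding condII_def by auto
      have "u ! (length u - 2) \<noteq> u ! (length u - 1)" using du l2 by (simp add: nth_eq_iff_index_eq)
      then have d: "u ! (length u - 2) > u ! (length u - 1)" using d0 by simp
      have "u ! (length u - 1) > m" using Hu l2 by auto
      then have "dd ?l (length u - 1)" using l2 d unfolding dd_def
        by (auto simp: nth_append numeral_2_eq_2 Suc_diff_Suc)
      then show ?thesis by blast
    next
      fix j assume dj: "dd v j"
      then obtain j' where j': "j = Suc j'" unfolding dd_def by (cases j) auto
      have "?l ! (Suc (length u) + j - 1) = v ! (j - 1)" "?l ! (Suc (length u) + j) = v ! j" "?l ! Suc (Suc (length u) + j) = v ! Suc j"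
        using j' by (simp_all add: nth_append)
      then have "dd ?l (Suc (length u) + j)" using dj unfolding dd_def by auto
      then show ?thesis by blast
    qed
  qed
  then show ?thesis using cI by blast
qed

lemma condII_split:
  assumes Hu: "\<forall>y\<in>set u. m < y" and Hv: "\<forall>y\<in>set v. m < y"
  shows "condII (u @ m # v) \<longleftrightarrow> (u = [] \<and> v = []) \<or> (v \<noteq> [] \<and> condII v)"
proof (cases "v = []")
  case True
  show ?thesis
  proof (cases "u = []")
    case True
    then show ?thesis using \<open>v = []\<close> by (simp add: condII_def)
  next
    case False
    then obtain u' a where ua: "u = u' @ [a]" by (cases u rule: rev_cases) auto
    then have "a > m" using Hu by auto
    then show ?thesis using \<open>v = []\<close> ua unfolding condII_def
      by (auto simp: nth_append)
  qed
next
  case False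
  show ?thesis
  proof (cases "length v = 1")
    case True
    then obtain a where "v = [a]" by (cases v) auto
    then show ?thesis using Hv unfolding condII_def by (auto simp: nth_append)
  next
    case False
    have "length v \<noteq> 0" using \<open>v \<noteq> []\<close> by simp
    then have "2 \<le> length v" using False by linarith
    then show ?thesis using \<open>v \<noteq> []\<close> unfolding condII_def
      by (auto simp: nth_append numeral_2_eq_2)
  qed
qed

lemma condIII_split:
  assumes Hu: "\<forall>y\<in>set u. m < y" and Hv: "\<forall>y\<in>set v. m < y"
  shows "condIII (u @ m # v) \<longleftrightarrow> condIII u \<and> condIII v \<and> (u \<noteq> [] \<and> v \<noteq> [] \<longrightarrow> Max (set u) < Max (set v))"
proof -
  have a: "\<forall>i\<in>vall u. i < length u" "\<forall>j\<in>vall v. j < length v" by (auto simp: vall_def)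
  have b: "\<forall>i\<in>vall u. w2 (u @ m # v) i = w2 u i \<and> w4 (u @ m # v) i = w4 u i"
    using a w2_u w4_u[OF Hu] by blast
  have c: "\<forall>j\<in>vall v. w2 (u @ m # v) (Suc (length u) + j) = w2 v j \<and> w4 (u @ m # v) (Suc (length u) + j) = w4 v j"
    using a w2_v[OF Hv] w4_v by blast
  let ?l = "u @ m # v"
  have 1: "(\<forall>i\<in>vall u. Max (w2 ?l i) < Max (w4 ?l i)) \<longleftrightarrow> condIII u"
    using b unfolding condIII_def by auto
  have 2: "(\<forall>j\<in>vall v. Max (w2 ?l (Suc (length u) + j)) < Max (w4 ?l (Suc (length u) + j))) \<longleftrightarrow> condIII v"
    using c unfolding condIII_def by auto
  have 3: "Max (w2 ?l (length u)) < Max (w4 ?l (length u)) \<longleftrightarrow> Max (set u) < Max (set v)"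
    by (simp add: w2_m[OF Hu] w4_m[OF Hv])
  have "condIII ?l \<longleftrightarrow> (\<forall>i\<in>vall u. Max (w2 ?l i) < Max (w4 ?l i)) \<and>
     (u \<noteq> [] \<and> v \<noteq> [] \<longrightarrow> Max (w2 ?l (length u)) < Max (w4 ?l (length u))) \<and>
     (\<forall>j\<in>vall v. Max (w2 ?l (Suc (length u) + j)) < Max (w4 ?l (Suc (length u) + j)))"
    unfolding condIII_def vall_split[OF Hu Hv] by auto
  then show ?thesis using 1 2 3 by blast
qed

lemma AndL_split:
  assumes Hu: "\<forall>y\<in>set u. m < y" and Hv: "\<forall>y\<in>set v. m < y" and du: "distinct u"
  shows "AndL (u @ m # v) \<longleftrightarrow> AndL u \<and> AndL v \<and> (v = [] \<longrightarrow> u = []) \<and>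
            (u \<noteq> [] \<and> v \<noteq> [] \<longrightarrow> Max (set u) < Max (set v))"
  unfolding AndL_def condI_split[OF Hu Hv du] condII_split[OF Hu Hv] condIII_split[OF Hu Hv]
  by (auto simp: condII_def)

lemma card_vall_split:
  assumes Hu: "\<forall>y\<in>set u. m < y" and Hv: "\<forall>y\<in>set v. m < y"
  shows "card (vall (u @ m # v)) = card (vall u) + (if u \<noteq> [] \<and> v \<noteq> [] then 1 else 0) + card (vall v)"
proof -
  have d1: "vall u \<inter> (\<lambda>j. Suc (length u) + j) ` vall v = {}" by (auto simp: vall_def)
  have d2: "length u \<notin> vall u" "length u \<notin> (\<lambda>j. Suc (length u) + j) ` vall v" by (auto simp: vall_def)
  have ci: "card ((\<lambda>j. Suc (length u) + j) ` vall v) = card (vall v)" by (simp add: card_image inj_on_def)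
  show ?thesis unfolding vall_split[OF Hu Hv]
    using d1 d2 ci by (auto simp: card_Un_disjoint card_insert_if)
qed



definition pms :: "int set \<Rightarrow> int list set" where
  "pms S = {l. set l = S \<and> distinct l}"

lemma finite_pms[simp]: "finite S \<Longrightarrow> finite (pms S)"
proof -
  assume f: "finite S"
  have "pms S \<subseteq> {l. set l \<subseteq> S \<and> length l = card S}"
    unfolding pms_def using distinct_card by fastforce
  moreover have "finite {l. set l \<subseteq> S \<and> length l = card S}"
    using f by (rule finite_lists_length_eq)
  ultimately show ?thesis by (rule finite_subset)
qed

lemma pms_empty[simp]: "pms {} = {[]}" by (auto simp: pms_def)

lemma sum_pms_split:
  assumes fin: "finite S" and c: "c \<in> S"
  shows "(\<Sum>\<pi>\<in>pms S. h \<pi>) = (\<Sum>U\<in>Pow (S - {c}). \<Sum>u\<in>pms U. \<Sum>v\<in>pms (S - {c} - U). h (u @ c # v))"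
proof -
  let ?S' = "S - {c}"
  let ?T = "Sigma (Pow ?S') (\<lambda>U. pms U \<times> pms (?S' - U))"
  have f1: "finite ?S'" using fin by simp
  have "(\<Sum>U\<in>Pow ?S'. \<Sum>u\<in>pms U. \<Sum>v\<in>pms (?S' - U). h (u @ c # v))
      = (\<Sum>U\<in>Pow ?S'. \<Sum>p\<in>pms U \<times> pms (?S' - U). h (fst p @ c # snd p))"
    by (simp add: sum.cartesian_product case_prod_beta)
  also have "\<dots> = (\<Sum>q\<in>?T. h (fst (snd q) @ c # snd (snd q)))"
  proof (subst sum.Sigma)
    show "finite (Pow ?S')" using f1 by simp
    show "\<forall>U\<in>Pow ?S'. finite (pms U \<times> pms (?S' - U))"
    proof
      fix U assume "U \<in> Pow ?S'"
      then have "finite U" using f1 by (auto intro: finite_subset)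
      then show "finite (pms U \<times> pms (?S' - U))" using f1 by simp
    qed
  qed (simp add: case_prod_beta)
  also have "\<dots> = (\<Sum>\<pi>\<in>pms S. h \<pi>)"
  proof (rule sum.reindex_bij_witness[where i = "\<lambda>\<pi>. (set (takeWhile (\<lambda>y. y \<noteq> c) \<pi>), takeWhile (\<lambda>y. y \<noteq> c) \<pi>, tl (dropWhile (\<lambda>y. y \<noteq> c) \<pi>))"
          and j = "\<lambda>q. fst (snd q) @ c # snd (snd q)"])
    fix q assume "q \<in> ?T"
    then obtain U u v where q: "q = (U, u, v)" "U \<subseteq> ?S'" "set u = U" "distinct u" "set v = ?S' - U" "distinct v"
      by (auto simp: pms_def)
    have cu: "c \<notin> set u" using q by auto
    have tw: "takeWhile (\<lambda>y. y \<noteq> c) (u @ c # v) = u" using cu by (induct u) auto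
    have dw: "dropWhile (\<lambda>y. y \<noteq> c) (u @ c # v) = c # v" using cu by (induct u) auto
    show "(set (takeWhile (\<lambda>y. y \<noteq> c) (fst (snd q) @ c # snd (snd q))), takeWhile (\<lambda>y. y \<noteq> c) (fst (snd q) @ c # snd (snd q)),
           tl (dropWhile (\<lambda>y. y \<noteq> c) (fst (snd q) @ c # snd (snd q)))) = q"
      using q tw dw by simp
    show "fst (snd q) @ c # snd (snd q) \<in> pms S"
      using q c by (auto simp: pms_def)
  next
    fix \<pi> assume p: "\<pi> \<in> pms S"
    then have cp: "c \<in> set \<pi>" and dp: "distinct \<pi>" and sp: "set \<pi> = S" using c by (auto simp: pms_def)
    obtain u v where uv: "\<pi> = u @ c # v" "c \<notin> set u" using cp by (metis split_list_first)
    have tw: "takeWhile (\<lambda>y. y \<noteq> c) (u @ c # v) = u" using uv(2) by (induct u) auto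
    have dw: "dropWhile (\<lambda>y. y \<noteq> c) (u @ c # v) = c # v" using uv(2) by (induct u) auto
    show "fst (snd (set (takeWhile (\<lambda>y. y \<noteq> c) \<pi>), takeWhile (\<lambda>y. y \<noteq> c) \<pi>, tl (dropWhile (\<lambda>y. y \<noteq> c) \<pi>))) @
          c # snd (snd (set (takeWhile (\<lambda>y. y \<noteq> c) \<pi>), takeWhile (\<lambda>y. y \<noteq> c) \<pi>, tl (dropWhile (\<lambda>y. y \<noteq> c) \<pi>))) = \<pi>"
      using uv tw dw by simp
    show "(set (takeWhile (\<lambda>y. y \<noteq> c) \<pi>), takeWhile (\<lambda>y. y \<noteq> c) \<pi>, tl (dropWhile (\<lambda>y. y \<noteq> c) \<pi>)) \<in> ?T"
      using uv tw dw dp sp by (auto simp: pms_def)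
  next
    fix q assume "q \<in> ?T"
    show "h (fst (snd q) @ c # snd (snd q)) = h (fst (snd q) @ c # snd (snd q))" ..
  qed
  finally show ?thesis by simp
qed



lemma min_split:
  assumes d: "distinct l" and ne: "l \<noteq> []"
  obtains m u v where "m = Min (set l)" "l = u @ m # v" "\<forall>y\<in>set u. m < y" "\<forall>y\<in>set v. m < y"
    "distinct u" "distinct v"
proof -
  define m where "m = Min (set l)"
  have "m \<in> set l" using ne unfolding m_def by simp
  then obtain u v where uv: "l = u @ m # v" by (metis split_list)
  have "\<forall>y\<in>set l. m \<le> y" unfolding m_def by simp
  moreover have "distinct (u @ m # v)" using d uv by simp
  then have "m \<notin> set u" "m \<notin> set v" by auto
  ultimately have "\<forall>y\<in>set u. m < y" "\<forall>y\<in>set v. m < y" using uv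
    by (auto simp: le_less)
  moreover have "distinct u" "distinct v" using d uv by auto
  ultimately show ?thesis using that uv m_def by blast
qed

lemma vall_bound:
  "distinct l \<Longrightarrow> AndL l \<Longrightarrow> l \<noteq> [] \<Longrightarrow> 2 * card (vall l) + 1 \<le> length l"
proof (induction "length l" arbitrary: l rule: less_induct)
  case less
  obtain m u v where uv: "l = u @ m # v" and Hu: "\<forall>y\<in>set u. m < y"
     and Hv: "\<forall>y\<in>set v. m < y" and du: "distinct u" and dv: "distinct v"
    using min_split[OF less.prems(1) less.prems(3)] by metis
  have A: "AndL u" "AndL v" "v = [] \<longrightarrow> u = []"
    using less.prems(2) AndL_split[OF Hu Hv du] uv by auto
  have c: "card (vall l) = card (vall u) + (if u \<noteq> [] \<and> v \<noteq> [] then 1 else 0) + card (vall v)"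
    using card_vall_split[OF Hu Hv] uv by simp
  have lu: "length u < length l" "length v < length l" using uv by auto
  have bu: "u \<noteq> [] \<Longrightarrow> 2 * card (vall u) + 1 \<le> length u"
    using less.hyps[of u] du A lu by auto
  have bv: "v \<noteq> [] \<Longrightarrow> 2 * card (vall v) + 1 \<le> length v"
    using less.hyps[of v] dv A lu by auto
  have vu: "u = [] \<Longrightarrow> card (vall u) = 0" by (simp add: vall_def)
  have vv: "v = [] \<Longrightarrow> card (vall v) = 0" by (simp add: vall_def)
  show ?case
  proof (cases "u = []")
    case True
    then show ?thesis using c uv bv vu vv by (cases "v = []") auto
  next
    case False
    then have "v \<noteq> []" using A by auto
    then show ?thesis using c uv bu bv False by auto
  qed
qed

definition wA :: "real \<Rightarrow> int list \<Rightarrow> real" where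
  "wA x l = (2 * x) ^ card (vall l) * (1 + x) ^ (length l - 1 - 2 * card (vall l))"

lemma wA_split:
  assumes Hu: "\<forall>y\<in>set u. m < y" and Hv: "\<forall>y\<in>set v. m < y" and d: "distinct (u @ m # v)"
    and A: "AndL (u @ m # v)"
  shows "wA x (u @ m # v) = (if u = [] then (if v = [] then 1 else (1 + x) * wA x v) else 2 * x * wA x u * wA x v)"
proof -
  have du: "distinct u" and dv: "distinct v" using d by auto
  have A': "AndL u" "AndL v" "v = [] \<longrightarrow> u = []"
    using A AndL_split[OF Hu Hv du] by auto
  have c: "card (vall (u @ m # v)) = card (vall u) + (if u \<noteq> [] \<and> v \<noteq> [] then 1 else 0) + card (vall v)"
    using card_vall_split[OF Hu Hv] by simp
  have vu: "u = [] \<Longrightarrow> card (vall u) = 0" by (simp add: vall_def)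
  have vv: "v = [] \<Longrightarrow> card (vall v) = 0" by (simp add: vall_def)
  have bu: "u \<noteq> [] \<Longrightarrow> 2 * card (vall u) + 1 \<le> length u" using vall_bound du A' by blast
  have bv: "v \<noteq> [] \<Longrightarrow> 2 * card (vall v) + 1 \<le> length v" using vall_bound dv A' by blast
  show ?thesis
  proof (cases "u = []")
    case True
    show ?thesis
    proof (cases "v = []")
      case True
      then show ?thesis using \<open>u = []\<close> c vu vv by (simp add: wA_def)
    next
      case False
      have e: "length (u @ m # v) - 1 - 2 * card (vall (u @ m # v)) = Suc (length v - 1 - 2 * card (vall v))"
        using bv False True c vu by auto
      show ?thesis unfolding wA_def e using True False c vu by simp
    qed
  next
    case False
    then have vne: "v \<noteq> []" using A' by auto
    have e2: "card (vall (u @ m # v)) = Suc (card (vall u) + card (vall v))" using c False vne by simp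
    have e: "length (u @ m # v) - 1 - 2 * Suc (card (vall u) + card (vall v)) =
       (length u - 1 - 2 * card (vall u)) + (length v - 1 - 2 * card (vall v))"
      using bu bv False vne by auto
    show ?thesis unfolding wA_def e2 e using False vne by (simp add: power_add mult_ac)
  qed
qed



definition FA :: "real \<Rightarrow> int set \<Rightarrow> real" where
  "FA x S = (\<Sum>\<pi>\<in>pms S. x ^ desI \<pi>)"

definition GA :: "real \<Rightarrow> int set \<Rightarrow> real" where
  "GA x S = (\<Sum>\<pi>\<in>pms S. (if AndL \<pi> then wA x \<pi> else 0))"

lemma FA_empty[simp]: "FA x {} = 1" by (simp add: FA_def)

lemma sum_pow_compl: "finite T \<Longrightarrow> (\<Sum>U\<in>Pow T. h (T - U)) = (\<Sum>U\<in>Pow T. h U)"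
  by (rule sum.reindex_bij_witness[where i="\<lambda>U. T - U" and j="\<lambda>U. T - U"]) auto

lemma sum_pow_sym:
  fixes l t :: "'a set \<Rightarrow> real"
  assumes "finite T" "\<And>U. U \<subseteq> T \<Longrightarrow> l U + l (T - U) = t U + t (T - U)"
  shows "sum l (Pow T) = sum t (Pow T)"
proof -
  have "2 * sum l (Pow T) = (\<Sum>U\<in>Pow T. l U + l (T - U))"
    using sum_pow_compl[OF assms(1), of l] by (simp add: sum.distrib)
  also have "\<dots> = (\<Sum>U\<in>Pow T. t U + t (T - U))" using assms(2) by (intro sum.cong) auto
  also have "\<dots> = 2 * sum t (Pow T)"
    using sum_pow_compl[OF assms(1), of t] by (simp add: sum.distrib)
  finally show ?thesis by simp
qed

lemma dsum: "(\<Sum>u\<in>A. \<Sum>v\<in>B. (c::real) * (f u * g v)) = c * sum f A * sum g B"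
proof -
  have "c * sum f A * sum g B = c * (\<Sum>u\<in>A. \<Sum>v\<in>B. f u * g v)" by (simp add: sum_product mult.assoc)
  also have "\<dots> = (\<Sum>u\<in>A. \<Sum>v\<in>B. c * (f u * g v))" by (simp add: sum_distrib_left)
  finally show ?thesis by simp
qed

lemma pieces:
  assumes "U \<in> Pow (S - {m})" "u \<in> pms U" "v \<in> pms (S - {m} - U)" "finite S" "\<forall>y\<in>S - {m}. m < y"
  shows "\<forall>y\<in>set u. m < y" "\<forall>y\<in>set v. m < y" "distinct (u @ m # v)" "set u = U" "set v = S - {m} - U"
    "distinct u" "distinct v"
  using assms by (auto simp: pms_def)

lemma FA_split:
  assumes fin: "finite S" and m: "m \<in> S" and lt: "\<forall>y\<in>S - {m}. m < y"
  shows "FA x S = (\<Sum>U\<in>Pow (S - {m}). x ^ (if U = {} then 0 else 1) * FA x U * FA x (S - {m} - U))"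
proof -
  have "FA x S = (\<Sum>U\<in>Pow (S - {m}). \<Sum>u\<in>pms U. \<Sum>v\<in>pms (S - {m} - U). x ^ desI (u @ m # v))"
    unfolding FA_def by (rule sum_pms_split[OF fin m])
  also have "\<dots> = (\<Sum>U\<in>Pow (S - {m}). \<Sum>u\<in>pms U. \<Sum>v\<in>pms (S - {m} - U). x ^ (if U = {} then 0 else 1) * (x ^ desI u * x ^ desI v))"
  proof (intro sum.cong refl)
    fix U u v assume a: "U \<in> Pow (S - {m})" "u \<in> pms U" "v \<in> pms (S - {m} - U)"
    note p = pieces[OF a fin lt]
    have "desI (u @ m # v) = (if U = {} then 0 else 1) + desI u + desI v"
    proof -
      have "u \<noteq> [] \<Longrightarrow> last u > m" using p(1) by auto
      moreover have "v \<noteq> [] \<Longrightarrow> hd v > m" using p(2) by auto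
      ultimately show ?thesis using p(4) by (auto simp: desI_split)
    qed
    then show "x ^ desI (u @ m # v) = x ^ (if U = {} then 0 else 1) * (x ^ desI u * x ^ desI v)"
      by (simp add: power_add)
  qed
  also have "\<dots> = (\<Sum>U\<in>Pow (S - {m}). x ^ (if U = {} then 0 else 1) * FA x U * FA x (S - {m} - U))"
    unfolding FA_def by (rule sum.cong[OF refl]) (rule dsum)
  finally show ?thesis .
qed

lemma wA_Nil[simp]: "wA x [] = 1" by (simp add: wA_def vall_def)
lemma GA_empty[simp]: "GA x {} = 1" by (simp add: GA_def)

lemma GA_split:
  assumes fin: "finite S" and m: "m \<in> S" and lt: "\<forall>y\<in>S - {m}. m < y"
  shows "GA x S = (\<Sum>U\<in>Pow (S - {m}). (if U = {} then (if S - {m} = {} then 1 else (1 + x) * GA x (S - {m}))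
      else (if S - {m} - U \<noteq> {} \<and> Max U < Max (S - {m} - U) then 2 * x * GA x U * GA x (S - {m} - U) else 0)))"
proof -
  let ?S' = "S - {m}"
  define c where "c U = (if U = {} then (if ?S' = {} then 1 else 1 + x) else
       (if ?S' - U \<noteq> {} \<and> Max U < Max (?S' - U) then 2 * x else 0))" for U
  have "GA x S = (\<Sum>U\<in>Pow ?S'. \<Sum>u\<in>pms U. \<Sum>v\<in>pms (?S' - U). (if AndL (u @ m # v) then wA x (u @ m # v) else 0))"
    unfolding GA_def by (rule sum_pms_split[OF fin m])
  also have "\<dots> = (\<Sum>U\<in>Pow ?S'. \<Sum>u\<in>pms U. \<Sum>v\<in>pms (?S' - U). c U * ((if AndL u then wA x u else 0) * (if AndL v then wA x v else 0)))"
  proof (intro sum.cong refl)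
    fix U u v assume a: "U \<in> Pow ?S'" "u \<in> pms U" "v \<in> pms (?S' - U)"
    note p = pieces[OF a fin lt]
    note As = AndL_split[OF p(1) p(2) p(6)]
    note Ws = wA_split[OF p(1) p(2) p(3)]
    show "(if AndL (u @ m # v) then wA x (u @ m # v) else 0) = c U * ((if AndL u then wA x u else 0) * (if AndL v then wA x v else 0))"
    proof (cases "U = {}")
      case True
      have u0: "u = []" using p(4) True by simp
      have cU: "c U = (if ?S' = {} then 1 else 1 + x)" using True unfolding c_def by (rule if_P)
      show ?thesis
      proof (cases "?S' = {}")
        case T2: True
        have "set v = {}" unfolding p(5) T2 by simp
        then have v0: "v = []" by simp
        have c1: "c U = 1" unfolding cU using T2 by (rule if_P)
        have A: "AndL (u @ m # v)" using As u0 v0 by simp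
        have W: "wA x (u @ m # v) = 1" using Ws[OF A] u0 v0 by simp
        show ?thesis using A W c1 u0 v0 by simp
      next
        case F2: False
        have "set v \<noteq> {}" unfolding p(5) True using F2 by simp
        then have v0: "v \<noteq> []" by simp
        have c1: "c U = 1 + x" unfolding cU using F2 by (rule if_not_P)
        have A: "AndL (u @ m # v) \<longleftrightarrow> AndL v" using As u0 v0 by simp
        show ?thesis
        proof (cases "AndL v")
          case True
          then have A2: "AndL (u @ m # v)" using A by simp
          have "wA x (u @ m # v) = (1 + x) * wA x v" using Ws[OF A2] u0 v0 by simp
          then show ?thesis using True c1 u0 A2 by simp
        next
          case False
          then show ?thesis using A by simp
        qed
      qed
    next
      case False
      have u0: "u \<noteq> []"
      proof
        assume "u = []"
        then have "U = {}" using p(4) by simp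
        then show False using False by simp
      qed
      have sv: "v \<noteq> [] \<longleftrightarrow> ?S' - U \<noteq> {}" unfolding p(5)[symmetric] by simp
      have cU: "c U = (if ?S' - U \<noteq> {} \<and> Max U < Max (?S' - U) then 2 * x else 0)"
        using False by (simp add: c_def)
      have As': "AndL (u @ m # v) \<longleftrightarrow> AndL u \<and> AndL v \<and> v \<noteq> [] \<and> Max U < Max (?S' - U)"
        using As u0 unfolding p(4) p(5) by blast
      show ?thesis
      proof (cases "AndL (u @ m # v)")
        case True
        then have "AndL u" "AndL v" "v \<noteq> []" "Max U < Max (?S' - U)" using As' by blast+
        moreover have "wA x (u @ m # v) = 2 * x * wA x u * wA x v" using Ws[OF True] u0 by simp
        ultimately show ?thesis using cU sv True by simp
      next
        case F: False
        show ?thesis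
        proof (cases "?S' - U \<noteq> {} \<and> Max U < Max (?S' - U)")
          case True
          then have "\<not> (AndL u \<and> AndL v)" using F As' sv by blast
          then show ?thesis using F by simp
        next
          case False
          have "c U = 0" unfolding cU using False by (rule if_not_P)
          then show ?thesis using F by simp
        qed
      qed
    qed
  qed
  also have "\<dots> = (\<Sum>U\<in>Pow ?S'. c U * GA x U * GA x (?S' - U))"
    unfolding GA_def by (rule sum.cong[OF refl]) (rule dsum)
  also have "\<dots> = (\<Sum>U\<in>Pow (S - {m}). (if U = {} then (if S - {m} = {} then 1 else (1 + x) * GA x (S - {m}))
      else (if S - {m} - U \<noteq> {} \<and> Max U < Max (S - {m} - U) then 2 * x * GA x U * GA x (S - {m} - U) else 0)))"
  proof (intro sum.cong refl)
    fix U assume "U \<in> Pow (S - {m})"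
    have GS: "S \<subseteq> {m} \<Longrightarrow> GA x (S - {m}) = 1" by (metis GA_empty Diff_eq_empty_iff)
    show "c U * GA x U * GA x (?S' - U) = (if U = {} then (if S - {m} = {} then 1 else (1 + x) * GA x (S - {m}))
      else (if S - {m} - U \<noteq> {} \<and> Max U < Max (S - {m} - U) then 2 * x * GA x U * GA x (S - {m} - U) else 0))"
      using GS by (auto simp: c_def)
  qed
  finally show ?thesis .
qed

theorem typeA: "finite S \<Longrightarrow> FA x S = GA x S"
proof (induction "card S" arbitrary: S rule: less_induct)
  case less
  show ?case
  proof (cases "S = {}")
    case True then show ?thesis by simp
  next
    case False
    define m where "m = Min S"
    let ?S' = "S - {m}"
    have mS: "m \<in> S" using False less.prems unfolding m_def by simp
    have lt: "\<forall>y\<in>?S'. m < y"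
    proof
      fix y assume y: "y \<in> ?S'"
      then have "m \<le> y" using less.prems unfolding m_def by simp
      moreover have "y \<noteq> m" using y by simp
      ultimately show "m < y" by simp
    qed
    have fS': "finite ?S'" using less.prems by simp
    have IH: "FA x U = GA x U" if "U \<subseteq> ?S'" for U
    proof -
      have "U \<subset> S" using that mS by auto
      then have "card U < card S" using less.prems by (rule psubset_card_mono[rotated])
      moreover have "finite U" using that fS' by (rule finite_subset)
      ultimately show ?thesis using less.hyps by blast
    qed
    have "FA x S = (\<Sum>U\<in>Pow ?S'. x ^ (if U = {} then 0 else 1) * FA x U * FA x (?S' - U))"
      by (rule FA_split[OF less.prems mS lt])
    also have "\<dots> = (\<Sum>U\<in>Pow ?S'. (if U = {} then (if ?S' = {} then 1 else (1 + x) * FA x ?S')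
      else (if ?S' - U \<noteq> {} \<and> Max U < Max (?S' - U) then 2 * x * FA x U * FA x (?S' - U) else 0)))"
    proof (cases "?S' = {}")
      case True then show ?thesis unfolding True by simp
    next
      case ne: False
      show ?thesis
      proof (rule sum_pow_sym[OF fS'])
        fix U assume U: "U \<subseteq> ?S'"
        have cc: "?S' - (?S' - U) = U" using U by auto
        show "x ^ (if U = {} then 0 else 1) * FA x U * FA x (?S' - U) + x ^ (if ?S' - U = {} then 0 else 1) * FA x (?S' - U) * FA x (?S' - (?S' - U)) =
          (if U = {} then (if ?S' = {} then 1 else (1 + x) * FA x ?S')
           else (if ?S' - U \<noteq> {} \<and> Max U < Max (?S' - U) then 2 * x * FA x U * FA x (?S' - U) else 0)) +
          (if ?S' - U = {} then (if ?S' = {} then 1 else (1 + x) * FA x ?S')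
           else (if ?S' - (?S' - U) \<noteq> {} \<and> Max (?S' - U) < Max (?S' - (?S' - U)) then 2 * x * FA x (?S' - U) * FA x (?S' - (?S' - U)) else 0))"
        proof (cases "U = {}")
          case True then show ?thesis using ne by (simp add: algebra_simps)
        next
          case Une: False
          show ?thesis
          proof (cases "?S' - U = {}")
            case True
            then have "U = ?S'" using U by auto
            then show ?thesis using ne by (simp add: algebra_simps)
          next
            case False
            have fU: "finite U" using U fS' by (rule finite_subset)
            have "Max U \<in> U" using fU Une by simp
            moreover have "Max (?S' - U) \<in> ?S' - U" by (rule Max_in[OF finite_Diff[OF fS'] False])
            ultimately have "Max U \<noteq> Max (?S' - U)" by auto
            then show ?thesis unfolding cc using Une False by (auto simp: algebra_simps)
          qed
        qed
      qed
    qed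
    also have "\<dots> = (\<Sum>U\<in>Pow ?S'. (if U = {} then (if ?S' = {} then 1 else (1 + x) * GA x ?S')
      else (if ?S' - U \<noteq> {} \<and> Max U < Max (?S' - U) then 2 * x * GA x U * GA x (?S' - U) else 0)))"
      using IH by (intro sum.cong refl) auto
    also have "\<dots> = GA x S" by (rule GA_split[OF less.prems mS lt, symmetric])
    finally show ?thesis .
  qed
qed



lemma desI_negrev: "desI (map uminus (rev l)) = desI l"
  using desI_revneg[of l] by (simp add: rev_map)

lemma FA_neg: "finite S \<Longrightarrow> FA x (uminus ` S) = FA x S"
  unfolding FA_def
  by (rule sum.reindex_bij_witness[where i="\<lambda>\<pi>. rev (map uminus \<pi>)" and j="\<lambda>\<pi>. rev (map uminus \<pi>)"])
     (auto simp: pms_def rev_map distinct_map inj_on_def desI_negrev image_image comp_def)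

lemma FA_split_max:
  assumes fin: "finite S" and m: "M \<in> S" and lt: "\<forall>y\<in>S - {M}. y < M"
  shows "FA x S = (\<Sum>U\<in>Pow (S - {M}). x ^ (if S - {M} - U = {} then 0 else 1) * FA x U * FA x (S - {M} - U))"
proof -
  have "FA x S = (\<Sum>U\<in>Pow (S - {M}). \<Sum>u\<in>pms U. \<Sum>v\<in>pms (S - {M} - U). x ^ desI (u @ M # v))"
    unfolding FA_def by (rule sum_pms_split[OF fin m])
  also have "\<dots> = (\<Sum>U\<in>Pow (S - {M}). \<Sum>u\<in>pms U. \<Sum>v\<in>pms (S - {M} - U). x ^ (if S - {M} - U = {} then 0 else 1) * (x ^ desI u * x ^ desI v))"
  proof (intro sum.cong refl)
    fix U u v assume a: "U \<in> Pow (S - {M})" "u \<in> pms U" "v \<in> pms (S - {M} - U)"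
    then have su: "set u = U" and sv: "set v = S - {M} - U" by (auto simp: pms_def)
    have "desI (u @ M # v) = (if S - {M} - U = {} then 0 else 1) + desI u + desI v"
    proof -
      have "u \<noteq> [] \<Longrightarrow> last u \<in> set u" by simp
      then have "u \<noteq> [] \<Longrightarrow> last u < M" using lt a su by auto
      moreover have "v \<noteq> [] \<Longrightarrow> hd v < M" using lt sv by (metis DiffD1 hd_in_set)
      moreover have "v = [] \<longleftrightarrow> S - {M} - U = {}" using sv by (metis set_empty)
      ultimately show ?thesis by (auto simp: desI_split)
    qed
    then show "x ^ desI (u @ M # v) = x ^ (if S - {M} - U = {} then 0 else 1) * (x ^ desI u * x ^ desI v)"
      by (simp add: power_add)
  qed
  also have "\<dots> = (\<Sum>U\<in>Pow (S - {M}). x ^ (if S - {M} - U = {} then 0 else 1) * FA x U * FA x (S - {M} - U))"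
    unfolding FA_def by (rule sum.cong[OF refl]) (rule dsum)
  finally show ?thesis .
qed

lemma FA_swap:
  assumes fin: "finite W" and M: "\<forall>y\<in>W. y < M" and m: "\<forall>y\<in>W. m < y"
  shows "FA x (insert M W) = FA x (insert m W)"
proof -
  have MW: "M \<notin> W" and mW: "m \<notin> W" using M m by auto
  have e1: "insert M W - {M} = W" and e2: "insert m W - {m} = W" using MW mW by auto
  have "FA x (insert M W) = (\<Sum>U\<in>Pow W. x ^ (if W - U = {} then 0 else 1) * FA x U * FA x (W - U))"
    using FA_split_max[of "insert M W" M x] fin M unfolding e1 by simp
  also have "\<dots> = (\<Sum>U\<in>Pow W. x ^ (if W - (W - U) = {} then 0 else 1) * FA x (W - U) * FA x (W - (W - U)))"
    by (rule sum_pow_compl[OF fin, symmetric])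
  also have "\<dots> = (\<Sum>U\<in>Pow W. x ^ (if U = {} then 0 else 1) * FA x U * FA x (W - U))"
    by (intro sum.cong refl) (auto simp: double_diff mult_ac)
  also have "\<dots> = FA x (insert m W)"
    using FA_split[of "insert m W" m x] fin m unfolding e2 by simp
  finally show ?thesis .
qed

definition fB :: "real \<Rightarrow> int set \<Rightarrow> real" where
  "fB x X = (\<Sum>\<pi>\<in>pms X. x ^ desI (0 # \<pi>))"

definition gB :: "real \<Rightarrow> int set \<Rightarrow> real" where
  "gB x X = (\<Sum>\<pi>\<in>pms X. (if AndL (0 # \<pi>) then wA x (0 # \<pi>) else 0))"

lemma AndL_single[simp]: "AndL [a]"
  using AndL_split[of "[]" a "[]"] by simp

lemma wA_single[simp]: "wA x [a] = 1" by (simp add: wA_def vall_def)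

lemma fB_empty[simp]: "fB x {} = 1" by (simp add: fB_def)
lemma gB_empty[simp]: "gB x {} = 1" by (simp add: gB_def)

lemma pos_case:
  assumes fin: "finite X" and ne: "X \<noteq> {}" and pos: "\<forall>y\<in>X. 0 < y"
  shows "fB x X + fB x (uminus ` X) = gB x X + gB x (uminus ` X)"
proof -
  have f1: "fB x X = FA x X"
    unfolding fB_def FA_def
  proof (intro sum.cong refl)
    fix \<pi> assume "\<pi> \<in> pms X"
    then have "\<pi> \<noteq> [] \<Longrightarrow> hd \<pi> > 0" using pos by (auto simp: pms_def)
    then show "x ^ desI (0 # \<pi>) = x ^ desI \<pi>" by (auto simp: desI_Cons)
  qed
  have f2: "fB x (uminus ` X) = x * FA x X"
  proof -
    have "fB x (uminus ` X) = (\<Sum>\<pi>\<in>pms (uminus ` X). x * x ^ desI \<pi>)"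
      unfolding fB_def
    proof (intro sum.cong refl)
      fix \<pi> assume p: "\<pi> \<in> pms (uminus ` X)"
      then have "\<pi> \<noteq> []" using ne by (auto simp: pms_def)
      moreover have "hd \<pi> < 0" if "\<pi> \<noteq> []"
      proof -
        have "hd \<pi> \<in> uminus ` X" using that p by (auto simp: pms_def)
        then show ?thesis using pos by auto
      qed
      ultimately show "x ^ desI (0 # \<pi>) = x * x ^ desI \<pi>" by (auto simp: desI_Cons)
    qed
    also have "\<dots> = x * FA x (uminus ` X)" by (simp add: FA_def sum_distrib_left)
    finally show ?thesis using FA_neg[OF fin] by simp
  qed
  have g1: "gB x X = (1 + x) * FA x X"
  proof -
    have "gB x X = (\<Sum>\<pi>\<in>pms X. (1 + x) * (if AndL \<pi> then wA x \<pi> else 0))"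
      unfolding gB_def
    proof (intro sum.cong refl)
      fix \<pi> assume p: "\<pi> \<in> pms X"
      then have ne': "\<pi> \<noteq> []" using ne by (auto simp: pms_def)
      have Hv: "\<forall>y\<in>set \<pi>. 0 < y" and d: "distinct ([] @ 0 # \<pi>)" using pos p by (auto simp: pms_def)
      have A: "AndL ([] @ 0 # \<pi>) \<longleftrightarrow> AndL \<pi>" using AndL_split[of "[]" 0 \<pi>] Hv ne' by simp
      have W: "AndL ([] @ 0 # \<pi>) \<Longrightarrow> wA x ([] @ 0 # \<pi>) = (1 + x) * wA x \<pi>"
        using wA_split[of "[]" 0 \<pi>] Hv d ne' by simp
      show "(if AndL (0 # \<pi>) then wA x (0 # \<pi>) else 0) = (1 + x) * (if AndL \<pi> then wA x \<pi> else 0)"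
        using A W by simp
    qed
    also have "\<dots> = (1 + x) * GA x X" by (simp add: GA_def sum_distrib_left)
    finally show ?thesis using typeA[OF fin] by simp
  qed
  have g2: "gB x (uminus ` X) = 0"
    unfolding gB_def
  proof (intro sum.neutral ballI)
    fix \<pi> assume p: "\<pi> \<in> pms (uminus ` X)"
    then have ne': "\<pi> \<noteq> []" and d: "distinct \<pi>" using ne by (auto simp: pms_def)
    have neg: "\<forall>y\<in>set \<pi>. y < 0" using p pos by (auto simp: pms_def)
    obtain m u v where uv: "\<pi> = u @ m # v" and Hu: "\<forall>y\<in>set u. m < y" and Hv: "\<forall>y\<in>set v. m < y"
      and du: "distinct u" and mm: "m = Min (set \<pi>)"
      using min_split[OF d ne'] by metis
    have m0: "m < 0" using neg uv by auto
    have Hu': "\<forall>y\<in>set (0 # u). m < y" using Hu m0 by auto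
    have du': "distinct (0 # u)" using du neg uv by auto
    have "\<not> AndL ((0 # u) @ m # v)"
    proof
      assume "AndL ((0 # u) @ m # v)"
      then have "v \<noteq> []" "Max (set (0 # u)) < Max (set v)"
        using AndL_split[OF Hu' Hv du'] by auto
      moreover have "Max (set v) < 0" using neg uv \<open>v \<noteq> []\<close> by auto
      moreover have "0 \<le> Max (set (0 # u))" by simp
      ultimately show False by simp
    qed
    then show "(if AndL (0 # \<pi>) then wA x (0 # \<pi>) else 0) = 0" using uv by simp
  qed
  show ?thesis using f1 f2 g1 g2 by (simp add: algebra_simps)
qed



definition Pm :: "int \<Rightarrow> int \<Rightarrow> int list \<Rightarrow> bool" where
  "Pm m M \<pi> = (M \<in> set (tl (dropWhile (\<lambda>y. y \<noteq> m) \<pi>)))"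

lemma Pm_at_m: "m \<notin> set u \<Longrightarrow> Pm m M (u @ m # v) \<longleftrightarrow> M \<in> set v"
  unfolding Pm_def by (induct u) auto

lemma Pm_at_M:
  assumes d: "distinct (u @ M # v)" and mi: "m \<in> set (u @ M # v)" and ne: "m \<noteq> M"
  shows "Pm m M (u @ M # v) \<longleftrightarrow> m \<in> set u"
proof (cases "m \<in> set u")
  case True
  then obtain u1 u2 where u: "u = u1 @ m # u2" "m \<notin> set u1" by (metis split_list_first)
  have "u @ M # v = u1 @ m # (u2 @ M # v)" using u by simp
  then show ?thesis using Pm_at_m[OF u(2), of M "u2 @ M # v"] True by simp
next
  case False
  then have "m \<in> set v" using mi ne by simp
  then obtain v1 v2 where v: "v = v1 @ m # v2" "m \<notin> set v1" by (metis split_list_first)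
  have e: "u @ M # v = (u @ M # v1) @ m # v2" using v by simp
  have "m \<notin> set (u @ M # v1)" using False ne v by simp
  then have "Pm m M (u @ M # v) \<longleftrightarrow> M \<in> set v2" unfolding e by (rule Pm_at_m)
  moreover have "M \<notin> set v2" using d v by auto
  ultimately show ?thesis using False by simp
qed

lemma Min_lt: "finite X \<Longrightarrow> \<forall>y\<in>X - {Min X}. Min X < y"
proof
  fix y assume "finite X" "y \<in> X - {Min X}"
  then have "Min X \<le> y" "y \<noteq> Min X" by auto
  then show "Min X < y" by simp
qed

lemma Max_gt: "finite X \<Longrightarrow> \<forall>y\<in>X - {Max X}. y < Max X"
proof
  fix y assume "finite X" "y \<in> X - {Max X}"
  then have "y \<le> Max X" "y \<noteq> Max X" by auto
  then show "y < Max X" by simp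
qed

lemma sum_restrict_pow:
  assumes fin: "finite A" and MA: "M \<in> A"
  shows "(\<Sum>U\<in>Pow A. (if M \<notin> U then (h U::real) else 0)) = (\<Sum>U\<in>Pow (A - {M}). h U)"
proof -
  have "(\<Sum>U\<in>Pow A. (if M \<notin> U then h U else 0)) = (\<Sum>U\<in>Pow (A - {M}). (if M \<notin> U then h U else 0))"
    by (rule sum.mono_neutral_cong_right) (use fin in auto)
  also have "\<dots> = (\<Sum>U\<in>Pow (A - {M}). h U)" by (intro sum.cong refl) auto
  finally show ?thesis .
qed

lemma fB_both:
  assumes fin: "finite X" and z: "0 \<notin> X" and ne: "X \<noteq> {}" and mX: "m = Min X" and MX: "M = Max X" and m0: "m < 0" and M0: "0 < M"
  shows "fB x X = 2 * x * (\<Sum>U\<in>Pow (X - {m} - {M}). fB x U * FA x (X - {m} - U))"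
proof -
  let ?Y = "X - {m} - {M}"
  have mIn: "m \<in> X" and MIn: "M \<in> X" using mX MX fin ne by auto
  have mM: "m \<noteq> M" using m0 M0 by simp
  have ltm: "\<forall>y\<in>X - {m}. m < y" using mX Min_lt[OF fin] by simp
  have gtM: "\<forall>y\<in>X - {M}. y < M" using MX Max_gt[OF fin] by simp
  define t where "t \<pi> = x ^ desI (0 # \<pi>)" for \<pi>
  have "fB x X = (\<Sum>\<pi>\<in>pms X. (if Pm m M \<pi> then t \<pi> else 0)) + (\<Sum>\<pi>\<in>pms X. (if \<not> Pm m M \<pi> then t \<pi> else 0))"
    unfolding fB_def t_def by (simp add: sum.distrib[symmetric] if_distrib) (intro sum.cong refl, simp)
  also have "(\<Sum>\<pi>\<in>pms X. (if Pm m M \<pi> then t \<pi> else 0)) = (\<Sum>U\<in>Pow ?Y. x * fB x U * FA x (X - {m} - U))"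
  proof -
    define c where "c U = (if M \<notin> U then x else 0)" for U :: "int set"
    have "(\<Sum>\<pi>\<in>pms X. (if Pm m M \<pi> then t \<pi> else 0)) =
       (\<Sum>U\<in>Pow (X - {m}). \<Sum>u\<in>pms U. \<Sum>v\<in>pms (X - {m} - U). (if Pm m M (u @ m # v) then t (u @ m # v) else 0))"
      by (rule sum_pms_split[OF fin mIn])
    also have "\<dots> = (\<Sum>U\<in>Pow (X - {m}). \<Sum>u\<in>pms U. \<Sum>v\<in>pms (X - {m} - U). c U * (x ^ desI (0 # u) * x ^ desI v))"
    proof (intro sum.cong refl)
      fix U u v assume a: "U \<in> Pow (X - {m})" "u \<in> pms U" "v \<in> pms (X - {m} - U)"
      note p = pieces[OF a fin ltm]
      have P: "Pm m M (u @ m # v) \<longleftrightarrow> M \<notin> U" using Pm_at_m[of m u M v] p MIn mM by auto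
      have "desI ((0 # u) @ m # v) = desI (0 # u) + 1 + desI v"
      proof -
        have "last (0 # u) \<in> set (0 # u)" by (rule last_in_set) simp
        then have "last (0 # u) > m" using p(1) m0 by auto
        moreover have "v \<noteq> [] \<Longrightarrow> hd v > m" using p(2) by auto
        ultimately show ?thesis using desI_split[of "0 # u" m v] by (auto split: if_splits)
      qed
      then have "t (u @ m # v) = x * (x ^ desI (0 # u) * x ^ desI v)" unfolding t_def by (simp add: power_add)
      then show "(if Pm m M (u @ m # v) then t (u @ m # v) else 0) = c U * (x ^ desI (0 # u) * x ^ desI v)"
        using P by (simp add: c_def)
    qed
    also have "\<dots> = (\<Sum>U\<in>Pow (X - {m}). c U * fB x U * FA x (X - {m} - U))"
      unfolding fB_def FA_def by (rule sum.cong[OF refl]) (rule dsum)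
    also have "\<dots> = (\<Sum>U\<in>Pow (X - {m}). (if M \<notin> U then x * fB x U * FA x (X - {m} - U) else 0))"
      by (intro sum.cong refl) (simp add: c_def)
    also have "\<dots> = (\<Sum>U\<in>Pow ?Y. x * fB x U * FA x (X - {m} - U))"
      by (rule sum_restrict_pow) (use fin MIn mM in auto)
    finally show ?thesis .
  qed
  also have "(\<Sum>\<pi>\<in>pms X. (if \<not> Pm m M \<pi> then t \<pi> else 0)) = (\<Sum>U\<in>Pow ?Y. x * fB x U * FA x (X - {m} - U))"
  proof -
    define c where "c U = (if m \<notin> U then x else 0)" for U :: "int set"
    have "(\<Sum>\<pi>\<in>pms X. (if \<not> Pm m M \<pi> then t \<pi> else 0)) =
       (\<Sum>U\<in>Pow (X - {M}). \<Sum>u\<in>pms U. \<Sum>v\<in>pms (X - {M} - U). (if \<not> Pm m M (u @ M # v) then t (u @ M # v) else 0))"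
      by (rule sum_pms_split[OF fin MIn])
    also have "\<dots> = (\<Sum>U\<in>Pow (X - {M}). \<Sum>u\<in>pms U. \<Sum>v\<in>pms (X - {M} - U). c U * (x ^ desI (0 # u) * x ^ desI v))"
    proof (intro sum.cong refl)
      fix U u v assume a: "U \<in> Pow (X - {M})" "u \<in> pms U" "v \<in> pms (X - {M} - U)"
      then have su: "set u = U" and sv: "set v = X - {M} - U" and du: "distinct u" and dv: "distinct v"
        and UX: "U \<subseteq> X - {M}" by (auto simp: pms_def)
      have Mu: "M \<notin> set u" using su UX by blast
      have Mv: "M \<notin> set v" using sv by blast
      have uv: "set u \<inter> set v = {}" using su sv by blast
      have d: "distinct (u @ M # v)" using du dv Mu Mv uv by simp
      have "m \<in> set u \<or> m \<in> set v" using su sv mIn mM by blast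
      then have mi: "m \<in> set (u @ M # v)" by auto
      have P: "\<not> Pm m M (u @ M # v) \<longleftrightarrow> m \<notin> U" using Pm_at_M[OF d mi mM] unfolding su by simp
      show "(if \<not> Pm m M (u @ M # v) then t (u @ M # v) else 0) = c U * (x ^ desI (0 # u) * x ^ desI v)"
      proof (cases "m \<in> U")
        case True then show ?thesis using P by (simp add: c_def)
      next
        case False
        have "m \<in> set v" unfolding sv using False mIn mM by blast
        then have vne: "v \<noteq> []" by auto
        have "desI ((0 # u) @ M # v) = desI (0 # u) + 1 + desI v"
        proof -
          have l0: "last (0 # u) \<in> set (0 # u)" by (rule last_in_set) simp
          have "\<forall>y\<in>set (0 # u). y < M" using gtM su UX M0 by auto
          then have "last (0 # u) < M" using l0 by blast
          moreover have "hd v < M" using gtM sv vne by (metis DiffD1 hd_in_set)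
          ultimately show ?thesis using vne desI_split[of "0 # u" M v] by (auto split: if_splits)
        qed
        then have "t (u @ M # v) = x * (x ^ desI (0 # u) * x ^ desI v)" unfolding t_def by (simp add: power_add)
        then show ?thesis using P False by (simp add: c_def)
      qed
    qed
    also have "\<dots> = (\<Sum>U\<in>Pow (X - {M}). c U * fB x U * FA x (X - {M} - U))"
      unfolding fB_def FA_def by (rule sum.cong[OF refl]) (rule dsum)
    also have "\<dots> = (\<Sum>U\<in>Pow (X - {M}). (if m \<notin> U then x * fB x U * FA x (X - {M} - U) else 0))"
      by (intro sum.cong refl) (simp add: c_def)
    also have "\<dots> = (\<Sum>U\<in>Pow ?Y. x * fB x U * FA x (X - {M} - U))"
    proof -
      have e: "X - {M} - {m} = ?Y" by auto
      show ?thesis unfolding e[symmetric] by (rule sum_restrict_pow) (use fin mIn mM in auto)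
    qed
    also have "(\<Sum>U\<in>Pow ?Y. x * fB x U * FA x (X - {M} - U)) = (\<Sum>U\<in>Pow ?Y. x * fB x U * FA x (X - {m} - U))"
    proof (intro sum.cong refl)
      fix U assume U: "U \<in> Pow ?Y"
      have fW: "finite (?Y - U)" using fin by simp
      have e1: "X - {M} - U = insert m (?Y - U)" using U mIn mM by auto
      have e2: "X - {m} - U = insert M (?Y - U)" using U MIn mM by auto
      have "FA x (insert M (?Y - U)) = FA x (insert m (?Y - U))"
        by (rule FA_swap[OF fW]) (use gtM ltm in auto)
      then show "x * fB x U * FA x (X - {M} - U) = x * fB x U * FA x (X - {m} - U)" unfolding e1 e2 by simp
    qed
    finally show ?thesis .
  qed
  finally show ?thesis by (simp add: sum_distrib_left algebra_simps sum.distrib[symmetric])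
qed

lemma gB_both:
  assumes fin: "finite X" and z: "0 \<notin> X" and ne: "X \<noteq> {}" and mX: "m = Min X" and MX: "M = Max X" and m0: "m < 0" and M0: "0 < M"
  shows "gB x X = 2 * x * (\<Sum>U\<in>Pow (X - {m} - {M}). gB x U * FA x (X - {m} - U))"
proof -
  let ?Y = "X - {m} - {M}"
  have mIn: "m \<in> X" and MIn: "M \<in> X" using mX MX fin ne by auto
  have mM: "m \<noteq> M" using m0 M0 by simp
  have ltm: "\<forall>y\<in>X - {m}. m < y" using mX Min_lt[OF fin] by simp
  have gtM: "\<forall>y\<in>X - {M}. y < M" using MX Max_gt[OF fin] by simp
  define c where "c U = (if M \<notin> U then 2 * x else 0)" for U :: "int set"
  have "gB x X = (\<Sum>U\<in>Pow (X - {m}). \<Sum>u\<in>pms U. \<Sum>v\<in>pms (X - {m} - U).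
      (if AndL (0 # (u @ m # v)) then wA x (0 # (u @ m # v)) else 0))"
    unfolding gB_def by (rule sum_pms_split[OF fin mIn])
  also have "\<dots> = (\<Sum>U\<in>Pow (X - {m}). \<Sum>u\<in>pms U. \<Sum>v\<in>pms (X - {m} - U).
      c U * ((if AndL (0 # u) then wA x (0 # u) else 0) * (if AndL v then wA x v else 0)))"
  proof (intro sum.cong refl)
    fix U u v assume a: "U \<in> Pow (X - {m})" "u \<in> pms U" "v \<in> pms (X - {m} - U)"
    note p = pieces[OF a fin ltm]
    have e: "0 # (u @ m # v) = (0 # u) @ m # v" by simp
    have Hu': "\<forall>y\<in>set (0 # u). m < y" using p(1) m0 by simp
    have UX: "U \<subseteq> X" using a by auto
    have du': "distinct (0 # u)" using p(6) p(4) UX z by auto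
    have dall: "distinct ((0 # u) @ m # v)" using p(3) p(4) p(5) UX z m0 by auto
    note As = AndL_split[OF Hu' p(2) du']
    note Ws = wA_split[OF Hu' p(2) dall]
    have fu: "finite (set (0 # u))" "set (0 # u) \<noteq> {}" by auto
    show "(if AndL (0 # (u @ m # v)) then wA x (0 # (u @ m # v)) else 0) =
        c U * ((if AndL (0 # u) then wA x (0 # u) else 0) * (if AndL v then wA x v else 0))"
      unfolding e
    proof (cases "M \<in> U")
      case True
      have "\<not> AndL ((0 # u) @ m # v)"
      proof
        assume A: "AndL ((0 # u) @ m # v)"
        then have vne: "v \<noteq> []" and lt: "Max (set (0 # u)) < Max (set v)" using As by auto
        have "M \<in> set (0 # u)" using True p(4) by simp
        then have "M \<le> Max (set (0 # u))" using fu by simp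
        moreover have mv: "Max (set v) \<in> set v" using vne by simp
        then have "Max (set v) \<in> X - {M}" unfolding p(5) using True by blast
        then have "Max (set v) < M" using gtM by blast
        ultimately show False using lt by linarith
      qed
      then show "(if AndL ((0 # u) @ m # v) then wA x ((0 # u) @ m # v) else 0) =
        c U * ((if AndL (0 # u) then wA x (0 # u) else 0) * (if AndL v then wA x v else 0))"
        using True by (simp add: c_def)
    next
      case False
      then have Mv: "M \<in> set v" using p(5) MIn mM by simp
      then have vne: "v \<noteq> []" by auto
      have "Max (set v) = M"
      proof (rule Max_eqI)
        show "finite (set v)" by simp
        show "M \<in> set v" by (rule Mv)
        fix y assume "y \<in> set v"
        then have "y \<in> X" using p(5) by blast
        then show "y \<le> M" using MX fin by simp
      qed
      moreover have "Max (set (0 # u)) < M"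
      proof -
        have "\<forall>y\<in>set (0 # u). y < M" using gtM p(4) UX False M0 by auto
        then show ?thesis using fu by simp
      qed
      ultimately have A: "AndL ((0 # u) @ m # v) \<longleftrightarrow> AndL (0 # u) \<and> AndL v" using As vne by auto
      show "(if AndL ((0 # u) @ m # v) then wA x ((0 # u) @ m # v) else 0) =
        c U * ((if AndL (0 # u) then wA x (0 # u) else 0) * (if AndL v then wA x v else 0))"
      proof (cases "AndL (0 # u) \<and> AndL v")
        case True
        then have A2: "AndL ((0 # u) @ m # v)" using A by simp
        have "wA x ((0 # u) @ m # v) = 2 * x * wA x (0 # u) * wA x v" using Ws[OF A2] by simp
        then show ?thesis using A2 True False by (simp add: c_def)
      next
        case F2: False
        then show ?thesis using A by auto
      qed
    qed
  qed
  also have "\<dots> = (\<Sum>U\<in>Pow (X - {m}). c U * gB x U * GA x (X - {m} - U))"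
    unfolding gB_def GA_def by (rule sum.cong[OF refl]) (rule dsum)
  also have "\<dots> = (\<Sum>U\<in>Pow (X - {m}). (if M \<notin> U then 2 * x * gB x U * FA x (X - {m} - U) else 0))"
    using typeA fin by (intro sum.cong refl) (simp add: c_def)
  also have "\<dots> = (\<Sum>U\<in>Pow ?Y. 2 * x * gB x U * FA x (X - {m} - U))"
    by (rule sum_restrict_pow) (use fin MIn mM in auto)
  finally show ?thesis by (simp add: sum_distrib_left mult.assoc)
qed



lemma Min_neg:
  fixes X :: "int set"
  assumes "finite X" "X \<noteq> {}"
  shows "Min (uminus ` X) = - Max X"
proof (rule Min_eqI)
  show "finite (uminus ` X)" using assms by simp
  show "- Max X \<in> uminus ` X" using assms by simp
  fix y assume "y \<in> uminus ` X"
  then obtain z where "z \<in> X" "y = - z" by auto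
  moreover have "z \<le> Max X" using assms \<open>z \<in> X\<close> by simp
  ultimately show "- Max X \<le> y" by simp
qed

lemma Max_neg:
  fixes X :: "int set"
  assumes "finite X" "X \<noteq> {}"
  shows "Max (uminus ` X) = - Min X"
proof (rule Max_eqI)
  show "finite (uminus ` X)" using assms by simp
  show "- Min X \<in> uminus ` X" using assms by simp
  fix y assume "y \<in> uminus ` X"
  then obtain z where "z \<in> X" "y = - z" by auto
  moreover have "Min X \<le> z" using assms \<open>z \<in> X\<close> by simp
  ultimately show "y \<le> - Min X" by simp
qed

lemma sum_pow_neg: "(\<Sum>U\<in>Pow (uminus ` Y). h U) = (\<Sum>U\<in>Pow Y. h (uminus ` U :: int set))"
  by (rule sum.reindex_bij_witness[where i="image uminus" and j="image uminus"]) (auto simp: image_image)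

lemma FA_swapXU:
  assumes fin: "finite X" and mX: "m = Min X" and MX: "M = Max X" and mM: "m \<noteq> M" and ne: "X \<noteq> {}"
    and U: "U \<subseteq> X - {m} - {M}"
  shows "FA x (X - {M} - U) = FA x (X - {m} - U)"
proof -
  let ?Y = "X - {m} - {M}"
  have mIn: "m \<in> X" and MIn: "M \<in> X" using mX MX fin ne by auto
  have ltm: "\<forall>y\<in>X - {m}. m < y" using mX Min_lt[OF fin] by simp
  have gtM: "\<forall>y\<in>X - {M}. y < M" using MX Max_gt[OF fin] by simp
  have fW: "finite (?Y - U)" using fin by simp
  have e1: "X - {M} - U = insert m (?Y - U)" using U mIn mM by auto
  have e2: "X - {m} - U = insert M (?Y - U)" using U MIn mM by auto
  have "FA x (insert M (?Y - U)) = FA x (insert m (?Y - U))"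
    by (rule FA_swap[OF fW]) (use gtM ltm in auto)
  then show ?thesis unfolding e1 e2 by simp
qed

lemma neg_form:
  assumes fin: "finite X" and ne: "X \<noteq> {}" and mX: "m = Min X" and MX: "M = Max X" and mM: "m \<noteq> M"
    and H: "h (uminus ` X) = 2 * x * (\<Sum>U\<in>Pow (uminus ` X - {- M} - {- m}). h U * FA x (uminus ` X - {- M} - U))"
  shows "h (uminus ` X) = 2 * x * (\<Sum>U\<in>Pow (X - {m} - {M}). h (uminus ` U) * FA x (X - {m} - U))"
proof -
  have e: "uminus ` X - {- M} - {- m} = uminus ` (X - {m} - {M})" by auto
  have "h (uminus ` X) = 2 * x * (\<Sum>U\<in>Pow (X - {m} - {M}). h (uminus ` U) * FA x (uminus ` X - {- M} - uminus ` U))"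
    using H unfolding e sum_pow_neg .
  also have "\<dots> = 2 * x * (\<Sum>U\<in>Pow (X - {m} - {M}). h (uminus ` U) * FA x (X - {m} - U))"
  proof (intro arg_cong[where f="\<lambda>s. 2 * x * s"] sum.cong refl)
    fix U assume U: "U \<in> Pow (X - {m} - {M})"
    have e2: "uminus ` X - {- M} - uminus ` U = uminus ` (X - {M} - U)" by auto
    have "FA x (uminus ` X - {- M} - uminus ` U) = FA x (X - {M} - U)"
      unfolding e2 by (rule FA_neg) (use fin in simp)
    also have "\<dots> = FA x (X - {m} - U)" using FA_swapXU[OF fin mX MX mM ne] U by blast
    finally show "h (uminus ` U) * FA x (uminus ` X - {- M} - uminus ` U) = h (uminus ` U) * FA x (X - {m} - U)" by simp
  qed
  finally show ?thesis .
qed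

theorem CB: "finite X \<Longrightarrow> 0 \<notin> X \<Longrightarrow> fB x X + fB x (uminus ` X) = gB x X + gB x (uminus ` X)"
proof (induction "card X" arbitrary: X rule: less_induct)
  case less
  note fin = less.prems(1) and z = less.prems(2)
  show ?case
  proof (cases "X = {}")
    case True then show ?thesis by simp
  next
    case ne: False
    show ?thesis
    proof (cases "\<forall>y\<in>X. 0 < y")
      case True then show ?thesis using pos_case[OF fin ne] by blast
    next
      case np: False
      show ?thesis
      proof (cases "\<forall>y\<in>X. y < 0")
        case True
        have fin': "finite (uminus ` X)" using fin by simp
        have ne': "uminus ` X \<noteq> {}" using ne by simp
        have "\<forall>y\<in>uminus ` X. 0 < y" using True by auto
        from pos_case[OF fin' ne' this, of x] show ?thesis by (simp add: image_image algebra_simps)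
      next
        case nn: False
        define m where "m = Min X"
        define M where "M = Max X"
        obtain a where a: "a \<in> X" "a \<le> 0" using np by force
        obtain b where b: "b \<in> X" "0 \<le> b" using nn by force
        have m0: "m < 0"
        proof -
          have "m \<le> a" using a fin unfolding m_def by simp
          moreover have "a \<noteq> 0" using a z by auto
          ultimately show ?thesis using a by simp
        qed
        have M0: "0 < M"
        proof -
          have "b \<le> M" using b fin unfolding M_def by simp
          moreover have "b \<noteq> 0" using b z by auto
          ultimately show ?thesis using b by simp
        qed
        have mM: "m \<noteq> M" using m0 M0 by simp
        let ?Y = "X - {m} - {M}"
        have fin': "finite (uminus ` X)" using fin by simp
        have z': "0 \<notin> uminus ` X" using z by (auto simp: image_iff)
        have ne': "uminus ` X \<noteq> {}" using ne by simp
        have mn: "- M = Min (uminus ` X)" using Min_neg[OF fin ne] M_def by simp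
        have Mn: "- m = Max (uminus ` X)" using Max_neg[OF fin ne] m_def by simp
        have f1: "fB x X = 2 * x * (\<Sum>U\<in>Pow ?Y. fB x U * FA x (X - {m} - U))"
          by (rule fB_both[OF fin z ne m_def M_def m0 M0])
        have g1: "gB x X = 2 * x * (\<Sum>U\<in>Pow ?Y. gB x U * FA x (X - {m} - U))"
          by (rule gB_both[OF fin z ne m_def M_def m0 M0])
        have f2: "fB x (uminus ` X) = 2 * x * (\<Sum>U\<in>Pow ?Y. fB x (uminus ` U) * FA x (X - {m} - U))"
          by (rule neg_form[OF fin ne m_def M_def mM]) (rule fB_both[OF fin' z' ne' mn Mn], use m0 M0 in auto)
        have g2: "gB x (uminus ` X) = 2 * x * (\<Sum>U\<in>Pow ?Y. gB x (uminus ` U) * FA x (X - {m} - U))"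
          by (rule neg_form[OF fin ne m_def M_def mM]) (rule gB_both[OF fin' z' ne' mn Mn], use m0 M0 in auto)
        have IH: "fB x U + fB x (uminus ` U) = gB x U + gB x (uminus ` U)" if "U \<in> Pow ?Y" for U
        proof -
          have mIn: "m \<in> X" using fin ne m_def by simp
          have "U \<subset> X" using that mIn by auto
          then have "card U < card X" using fin by (rule psubset_card_mono[rotated])
          moreover have "finite U" using that fin by (auto intro: finite_subset)
          moreover have "0 \<notin> U" using that z by auto
          ultimately show ?thesis using less.hyps by blast
        qed
        have "fB x X + fB x (uminus ` X) = 2 * x * (\<Sum>U\<in>Pow ?Y. (fB x U + fB x (uminus ` U)) * FA x (X - {m} - U))"
          unfolding f1 f2 by (simp add: sum.distrib ring_distribs)
        also have "\<dots> = 2 * x * (\<Sum>U\<in>Pow ?Y. (gB x U + gB x (uminus ` U)) * FA x (X - {m} - U))"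
          using IH by simp
        also have "\<dots> = gB x X + gB x (uminus ` X)"
          unfolding g1 g2 by (simp add: sum.distrib ring_distribs)
        finally show ?thesis .
      qed
    qed
  qed
qed



definition SS :: "nat \<Rightarrow> int set set" where
  "SS n = {X. X \<subseteq> {- int n..int n} \<and> inj_on abs X \<and> abs ` X = {1..int n}}"

lemma finite_SS: "finite (SS n)"
  by (rule finite_subset[of _ "Pow {- int n..int n}"]) (auto simp: SS_def)

lemma SS_props:
  assumes "X \<in> SS n"
  shows "finite X" "0 \<notin> X" "card X = n"
proof -
  show "finite X" using assms by (auto simp: SS_def intro: finite_subset)
  show "0 \<notin> X"
  proof
    assume "0 \<in> X"
    then have "abs 0 \<in> abs ` X" by blast
    then show False using assms by (auto simp: SS_def)
  qed
  have i: "inj_on abs X" and e: "abs ` X = {1..int n}" using assms by (auto simp: SS_def)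
  have "card X = card (abs ` X)" using card_image[OF i] by simp
  also have "\<dots> = n" unfolding e by simp
  finally show "card X = n" .
qed

lemma SS_neg: "X \<in> SS n \<Longrightarrow> uminus ` X \<in> SS n"
proof -
  assume X: "X \<in> SS n"
  have "abs ` uminus ` X = abs ` X" by (auto simp: image_image)
  moreover have "inj_on abs (uminus ` X)" using X by (auto simp: SS_def inj_on_def)
  moreover have "uminus ` X \<subseteq> {- int n..int n}" using X by (auto simp: SS_def)
  ultimately show ?thesis using X by (simp add: SS_def)
qed

lemma sum_SS_neg: "(\<Sum>X\<in>SS n. h (uminus ` X)) = (\<Sum>X\<in>SS n. h X)"
  by (rule sum.reindex_bij_witness[where i="image uminus" and j="image uminus"])
     (auto simp: image_image SS_neg)

lemma SP_char: "w \<in> signed_perms n \<longleftrightarrow> distinct w \<and> set w \<in> SS n"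
proof
  assume w: "w \<in> signed_perms n"
  then have d: "distinct (map abs w)" and s: "abs ` set w = {1..int n}" by (auto simp: signed_perms_def)
  have "set w \<subseteq> {- int n..int n}"
  proof
    fix a assume "a \<in> set w"
    then have "abs a \<in> {1..int n}" using s by blast
    then show "a \<in> {- int n..int n}" by auto
  qed
  then show "distinct w \<and> set w \<in> SS n" using d s by (simp add: SS_def distinct_map)
next
  assume w: "distinct w \<and> set w \<in> SS n"
  then have d: "distinct (map abs w)" by (simp add: SS_def distinct_map)
  have s: "set (map abs w) = {1..int n}" using w by (simp add: SS_def)
  have "length w = n" using distinct_card[of "map abs w"] d s by simp
  then show "w \<in> signed_perms n" using d s by (simp add: signed_perms_def)
qed

lemma finite_SP: "finite (signed_perms n)"
proof -
  have "signed_perms n \<subseteq> {w. set w \<subseteq> {- int n..int n} \<and> length w = n}"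
  proof
    fix w assume w: "w \<in> signed_perms n"
    then have "set w \<subseteq> {- int n..int n}" unfolding SP_char SS_def by blast
    moreover have "length w = n" using w by (simp add: signed_perms_def)
    ultimately show "w \<in> {w. set w \<subseteq> {- int n..int n} \<and> length w = n}" by simp
  qed
  moreover have "finite {w. set w \<subseteq> {- int n..int n} \<and> length w = n}"
    by (rule finite_lists_length_eq) simp
  ultimately show ?thesis by (rule finite_subset)
qed

lemma sum_SP: "(\<Sum>w\<in>signed_perms n. h w) = (\<Sum>X\<in>SS n. \<Sum>w\<in>pms X. h w)"
proof -
  have "(\<Sum>X\<in>SS n. sum h {w \<in> signed_perms n. set w = X}) = sum h (signed_perms n)"
    by (rule sum.group[OF finite_SP finite_SS]) (auto simp: SP_char)
  moreover have "{w \<in> signed_perms n. set w = X} = pms X" if "X \<in> SS n" for X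
    using that by (auto simp: SP_char pms_def)
  ultimately show ?thesis by simp
qed

lemma desB_eq: "desB w = desI (0 # w)"
  unfolding desB_def desI_def zword_def by simp

lemma valleys_eq: "valleys w = vall (0 # w)"
  unfolding valleys_def vall_def zword_def by auto

lemma andreB_eq: "w \<noteq> [] \<Longrightarrow> andreB w \<longleftrightarrow> AndL (0 # w)"
proof -
  assume ne: "w \<noteq> []"
  have c1: "(\<not> (\<exists>i. 1 \<le> i \<and> i < length w \<and> zword w ! (i - 1) > zword w ! i \<and> zword w ! i > zword w ! (i + 1)))
     \<longleftrightarrow> condI (0 # w)" unfolding condI_def zword_def by simp
  have c2: "(zword w ! (length w - 1) < zword w ! (length w)) \<longleftrightarrow> condII (0 # w)"
    using ne unfolding condII_def zword_def by (cases w) auto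
  have e2: "max_w2 w i = Max (w2 (0 # w) i)" for i unfolding max_w2_def w2_def zword_def ..
  have e4: "max_w4 w i = Max (w4 (0 # w) i)" for i unfolding max_w4_def w4_def zword_def
    by (simp add: less_Suc_eq_le)
  have c3: "(\<forall>i \<in> valleys w. max_w2 w i < max_w4 w i) \<longleftrightarrow> condIII (0 # w)"
    unfolding condIII_def valleys_eq e2 e4 ..
  show ?thesis unfolding andreB_def AndL_def using c1 c2 c3 by blast
qed



theorem mainTheorem15:
  fixes n :: nat and x :: real
  assumes "n \<ge> 1"
  shows "BnPoly n x = (\<Sum>j=0..n div 2. 2 ^ j * real (bhat n j) * x ^ j * (1 + x) ^ (n - 2 * j))"
proof -
  have L: "BnPoly n x = (\<Sum>X\<in>SS n. fB x X)"
    unfolding BnPoly_def sum_SP fB_def desB_eq ..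
  have FG: "(\<Sum>X\<in>SS n. fB x X) = (\<Sum>X\<in>SS n. gB x X)"
  proof -
    have "2 * (\<Sum>X\<in>SS n. fB x X) = (\<Sum>X\<in>SS n. fB x X) + (\<Sum>X\<in>SS n. fB x (uminus ` X))"
      unfolding sum_SS_neg[of "fB x" n] by (rule mult_2)
    also have "\<dots> = (\<Sum>X\<in>SS n. fB x X + fB x (uminus ` X))"
      by (rule sum.distrib[symmetric])
    also have "\<dots> = (\<Sum>X\<in>SS n. gB x X + gB x (uminus ` X))"
    proof (intro sum.cong refl)
      fix X assume X: "X \<in> SS n"
      show "fB x X + fB x (uminus ` X) = gB x X + gB x (uminus ` X)"
        by (rule CB[OF SS_props(1)[OF X] SS_props(2)[OF X]])
    qed
    also have "\<dots> = (\<Sum>X\<in>SS n. gB x X) + (\<Sum>X\<in>SS n. gB x (uminus ` X))"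
      by (rule sum.distrib)
    also have "\<dots> = 2 * (\<Sum>X\<in>SS n. gB x X)"
      unfolding sum_SS_neg[of "gB x" n] by (rule mult_2[symmetric])
    finally show ?thesis by simp
  qed
  define W where "W w = (2 * x) ^ card (valleys w) * (1 + x) ^ (n - 2 * card (valleys w))" for w
  have G: "(\<Sum>X\<in>SS n. gB x X) = (\<Sum>w\<in>signed_perms n. if andreB w then W w else 0)"
    unfolding sum_SP gB_def
  proof (intro sum.cong refl)
    fix X w assume X: "X \<in> SS n" and w: "w \<in> pms X"
    have sw: "set w = X" and dw: "distinct w" using w by (auto simp: pms_def)
    have len: "length w = n" using distinct_card[OF dw] sw SS_props(3)[OF X] by simp
    then have ne: "w \<noteq> []" using assms by auto
    show "(if AndL (0 # w) then wA x (0 # w) else 0) = (if andreB w then W w else 0)"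
      using andreB_eq[OF ne] valleys_eq[of w] len by (simp add: wA_def W_def)
  qed
  let ?A = "{w \<in> signed_perms n. andreB w}"
  have bound: "card (valleys w) \<in> {0..n div 2}" if "w \<in> ?A" for w
  proof -
    have wS: "w \<in> signed_perms n" and aw: "andreB w" using that by auto
    have dw: "distinct w" and sS: "set w \<in> SS n" using wS by (auto simp: SP_char)
    have len: "length w = n" using wS by (simp add: signed_perms_def)
    then have ne: "w \<noteq> []" using assms by auto
    have "0 \<notin> set w" using SS_props(2)[OF sS] .
    then have d0: "distinct (0 # w)" using dw by simp
    have "AndL (0 # w)" using andreB_eq[OF ne] aw by simp
    from vall_bound[OF d0 this] have "2 * card (vall (0 # w)) + 1 \<le> Suc n" using len by simp
    then show ?thesis unfolding valleys_eq by auto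
  qed
  have "(\<Sum>w\<in>signed_perms n. if andreB w then W w else 0) = (\<Sum>w\<in>?A. W w)"
    by (simp add: sum.inter_filter[OF finite_SP])
  also have "\<dots> = (\<Sum>j\<in>{0..n div 2}. \<Sum>w\<in>{w \<in> ?A. card (valleys w) = j}. W w)"
    by (rule sum.group[symmetric]) (use finite_SP bound in auto)
  also have "\<dots> = (\<Sum>j=0..n div 2. 2 ^ j * real (bhat n j) * x ^ j * (1 + x) ^ (n - 2 * j))"
  proof (intro sum.cong refl)
    fix j assume "j \<in> {0..n div 2}"
    have e: "{w \<in> ?A. card (valleys w) = j} = {w \<in> signed_perms n. andreB w \<and> card (valleys w) = j}" by auto
    have "(\<Sum>w\<in>{w \<in> ?A. card (valleys w) = j}. W w) = (\<Sum>w\<in>{w \<in> ?A. card (valleys w) = j}. (2 * x) ^ j * (1 + x) ^ (n - 2 * j))"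
      by (intro sum.cong refl) (simp add: W_def)
    also have "\<dots> = real (bhat n j) * ((2 * x) ^ j * (1 + x) ^ (n - 2 * j))"
      unfolding bhat_def e by simp
    finally show "(\<Sum>w\<in>{w \<in> ?A. card (valleys w) = j}. W w) = 2 ^ j * real (bhat n j) * x ^ j * (1 + x) ^ (n - 2 * j)"
      by (simp add: power_mult_distrib mult_ac)
  qed
  finally show ?thesis using L FG G by simp
qed


end
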